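(* Let $K\subseteq\mathbb R^2$ be a compact set containing no array on three points, let $f\in C(K)$, $\varepsilon>0$, and let $\delta>0$ be such that $|x_1-x_2|<2\delta$ implies $|f(x_1)-f(x_2)|<\varepsilon$ for all $x_1,x_2\in K$. There exists $n_0\in\mathbb N$ such that for every $n\ge n_0$ (and every choice of $f^n$ as in the context) there is a function $g^n:V(\Gamma^n)\to\mathbb R$ with the following properties: (1a) if $u_1u_2$ is an edge of $\Gamma^n_{\mathrm{short}}$ then $|g^n(u_1)-g^n(u_2)|\le\varepsilon$; (1b) if $u_1u_2$ is an edge of $\Gamma^n_{\mathrm{hor}}$ then $|f^n(u_1)-g^n(u_1)|\le\varepsilon$ and $|f^n(u_2)-g^n(u_2)|\le\varepsilon$; (1c) if $u_1u_2$ is an edge of $\Gamma^n_{\mathrm{vert}}$ then $g^n(u_1)=g^n(u_2)=0$; (2) $\max_{u\in V(\Gamma^n)}|g^n(u)|\le\max_{u\in V(\Gamma^n)}|f^n(u)|$.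
   Context: An array on three points is a triple $a_1,a_2,a_3$ of points in the plane with $a_1\ne a_2$, $a_2\ne a_3$, such that the segments $[a_1;a_2]$ and $[a_2;a_3]$ are each parallel to a coordinate axis and are mutually orthogonal. Let $p(x,y)=x$, $q(x,y)=y$; $|\cdot|$ on $\mathbb R^2$ is the Euclidean norm. For $n\in\mathbb N$ the graph $\Gamma^n$ has vertex set all lattice points $u=(i/2^n,j/2^n)$, $i,j\in\mathbb Z$, such that the square $S_u=[i/2^n;(i+1)/2^n)\times[j/2^n;(j+1)/2^n)$ meets $K$, and edges all two-element sets $\{u_1,u_2\}$ of vertices with $|p(u_1)-p(u_2)|\le 1/2^n$ or $|q(u_1)-q(u_2)|\le 1/2^n$. An edge $u_1u_2$ is vertical if $|p(u_1)-p(u_2)|\le1/2^n$, horizontal if $|q(u_1)-q(u_2)|\le1/2^n$, long if $|u_1-u_2|\ge\delta$, short if $|u_1-u_2|<\delta$. $\Gamma^n_{\mathrm{short}}$, $\Gamma^n_{\mathrm{hor}}$, $\Gamma^n_{\mathrm{vert}}$ are the subgraphs formed by all short edges, all long horizontal edges, and all long vertical edges respectively (with their endpoints). The function $f^n:V(\Gamma^n)\to\mathbb R$ is defined by fixing for each vertex $u$ a point $x_u\in K\cap S_u$ and setting $f^n(u)=f(x_u)$. *)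

theory Defs
  imports "HOL-Analysis.Analysis"
begin

text \<open>Points of the plane are modelled as \<open>real \<times> real\<close>; the product norm
  on this type is the Euclidean norm.  \<open>fst\<close> is the projection p, \<open>snd\<close> is q.\<close>

definition is_array :: "(real \<times> real) \<Rightarrow> (real \<times> real) \<Rightarrow> (real \<times> real) \<Rightarrow> bool" where
  "is_array a1 a2 a3 \<longleftrightarrow> a1 \<noteq> a2 \<and> a2 \<noteq> a3 \<and>
     ((snd a1 = snd a2 \<and> fst a2 = fst a3) \<or> (fst a1 = fst a2 \<and> snd a2 = snd a3))"

definition no_array :: "(real \<times> real) set \<Rightarrow> bool" where
  "no_array K \<longleftrightarrow> \<not> (\<exists>a1\<in>K. \<exists>a2\<in>K. \<exists>a3\<in>K. is_array a1 a2 a3)"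

definition sq :: "nat \<Rightarrow> real \<times> real \<Rightarrow> (real \<times> real) set" where
  "sq n u = {x. fst u \<le> fst x \<and> fst x < fst u + 1 / 2 ^ n \<and>
                snd u \<le> snd x \<and> snd x < snd u + 1 / 2 ^ n}"

definition verts :: "nat \<Rightarrow> (real \<times> real) set \<Rightarrow> (real \<times> real) set" where
  "verts n K = {u. (\<exists>i j :: int. u = (of_int i / 2 ^ n, of_int j / 2 ^ n)) \<and> sq n u \<inter> K \<noteq> {}}"

definition edge :: "nat \<Rightarrow> (real \<times> real) set \<Rightarrow> real \<times> real \<Rightarrow> real \<times> real \<Rightarrow> bool" where
  "edge n K u1 u2 \<longleftrightarrow> u1 \<in> verts n K \<and> u2 \<in> verts n K \<and> u1 \<noteq> u2 \<and>
     (\<bar>fst u1 - fst u2\<bar> \<le> 1 / 2 ^ n \<or> \<bar>snd u1 - snd u2\<bar> \<le> 1 / 2 ^ n)"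

definition vertical_edge where
  "vertical_edge n K u1 u2 \<longleftrightarrow> edge n K u1 u2 \<and> \<bar>fst u1 - fst u2\<bar> \<le> 1 / 2 ^ n"

definition horizontal_edge where
  "horizontal_edge n K u1 u2 \<longleftrightarrow> edge n K u1 u2 \<and> \<bar>snd u1 - snd u2\<bar> \<le> 1 / 2 ^ n"

definition short_edge :: "nat \<Rightarrow> (real \<times> real) set \<Rightarrow> real \<Rightarrow> real \<times> real \<Rightarrow> real \<times> real \<Rightarrow> bool" where
  "short_edge n K \<delta> u1 u2 \<longleftrightarrow> edge n K u1 u2 \<and> norm (u1 - u2) < \<delta>"

definition long_hor_edge :: "nat \<Rightarrow> (real \<times> real) set \<Rightarrow> real \<Rightarrow> real \<times> real \<Rightarrow> real \<times> real \<Rightarrow> bool" where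
  "long_hor_edge n K \<delta> u1 u2 \<longleftrightarrow> horizontal_edge n K u1 u2 \<and> norm (u1 - u2) \<ge> \<delta>"

definition long_vert_edge :: "nat \<Rightarrow> (real \<times> real) set \<Rightarrow> real \<Rightarrow> real \<times> real \<Rightarrow> real \<times> real \<Rightarrow> bool" where
  "long_vert_edge n K \<delta> u1 u2 \<longleftrightarrow> vertical_edge n K u1 u2 \<and> norm (u1 - u2) \<ge> \<delta>"

end

theory Submission
  imports Defs
begin

lemma norm_le_sum: "norm (p::real\<times>real) \<le> \<bar>fst p\<bar> + \<bar>snd p\<bar>"
  by (cases p) (simp add: norm_Pair sqrt_sum_squares_le_sum_abs)

lemma edge_sym: "edge n K u1 u2 \<Longrightarrow> edge n K u2 u1"
  unfolding edge_def by (auto simp: abs_minus_commute)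
lemma short_sym: "short_edge n K d u1 u2 \<Longrightarrow> short_edge n K d u2 u1"
  unfolding short_edge_def using edge_sym by (metis norm_minus_commute)
lemma lvert_sym: "long_vert_edge n K d u1 u2 \<Longrightarrow> long_vert_edge n K d u2 u1"
  unfolding long_vert_edge_def vertical_edge_def using edge_sym by (metis norm_minus_commute abs_minus_commute)
lemma lhor_sym: "long_hor_edge n K d u1 u2 \<Longrightarrow> long_hor_edge n K d u2 u1"
  unfolding long_hor_edge_def horizontal_edge_def using edge_sym by (metis norm_minus_commute abs_minus_commute)

lemma pert:
  assumes v: "\<forall>u\<in>verts n K. x u \<in> K \<inter> sq n u" and u: "u1 \<in> verts n K" "u2 \<in> verts n K"
  shows "\<bar>fst (x u1) - fst (x u2)\<bar> \<le> \<bar>fst u1 - fst u2\<bar> + 1/2^n"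
    "\<bar>snd (x u1) - snd (x u2)\<bar> \<le> \<bar>snd u1 - snd u2\<bar> + 1/2^n"
    "norm (x u1 - x u2) \<le> norm (u1 - u2) + 4/2^n"
    "norm (u1 - u2) \<le> norm (x u1 - x u2) + 4/2^n"
proof -
  have a: "fst u1 \<le> fst (x u1) \<and> fst (x u1) < fst u1 + 1/2^n \<and> snd u1 \<le> snd (x u1) \<and> snd (x u1) < snd u1 + 1/2^n"
    using v u(1) by (auto simp: sq_def)
  have b: "fst u2 \<le> fst (x u2) \<and> fst (x u2) < fst u2 + 1/2^n \<and> snd u2 \<le> snd (x u2) \<and> snd (x u2) < snd u2 + 1/2^n"
    using v u(2) by (auto simp: sq_def)
  show "\<bar>fst (x u1) - fst (x u2)\<bar> \<le> \<bar>fst u1 - fst u2\<bar> + 1/2^n" using a b by linarith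
  show "\<bar>snd (x u1) - snd (x u2)\<bar> \<le> \<bar>snd u1 - snd u2\<bar> + 1/2^n" using a b by linarith
  have n1: "norm (x u1 - u1) \<le> 2/2^n" using norm_le_sum[of "x u1 - u1"] a by simp
  have n2: "norm (x u2 - u2) \<le> 2/2^n" using norm_le_sum[of "x u2 - u2"] b by simp
  have n3: "dist u2 (x u2) \<le> 2/2^n" "dist (x u1) u1 \<le> 2/2^n" "dist u1 (x u1) \<le> 2/2^n" "dist (x u2) u2 \<le> 2/2^n"
    using n1 n2 by (simp_all add: dist_norm norm_minus_commute)
  have t1: "dist (x u1) (x u2) \<le> dist (x u1) u1 + dist u1 u2 + dist u2 (x u2)"
    using dist_triangle[of "x u1" "x u2" u1] dist_triangle[of u1 "x u2" u2] by linarith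
  have t2: "dist u1 u2 \<le> dist u1 (x u1) + dist (x u1) (x u2) + dist (x u2) u2"
    using dist_triangle[of u1 u2 "x u1"] dist_triangle[of "x u1" u2 "x u2"] by linarith
  show "norm (x u1 - x u2) \<le> norm (u1 - u2) + 4/2^n"
    using t1 n3 unfolding dist_norm by linarith
  show "norm (u1 - u2) \<le> norm (x u1 - x u2) + 4/2^n"
    using t2 n3 unfolding dist_norm by linarith
qed

lemma pow_lim: "(\<lambda>n. (c::real)/2^n) \<longlonglongrightarrow> 0"
proof -
  have "(\<lambda>n. c * inverse (2^n)) \<longlonglongrightarrow> c * 0"
    by (intro tendsto_intros LIMSEQ_inverse_realpow_zero) simp
  thus ?thesis by (simp add: divide_inverse)
qed

lemma multi_subseq:
  fixes m :: nat and s :: "nat \<Rightarrow> nat \<Rightarrow> 'a::metric_space"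
  assumes "compact K" "\<forall>j. \<forall>i\<le>m. s j i \<in> K"
  shows "\<exists>r l. strict_mono r \<and> (\<forall>i\<le>m. l i \<in> K \<and> (\<lambda>j. s (r j) i) \<longlonglongrightarrow> l i)"
  using assms(2)
proof (induction m)
  case 0
  have "seq_compact K" using assms(1) by (simp add: compact_imp_seq_compact)
  then obtain l r where "l \<in> K" "strict_mono r" "((\<lambda>j. s j 0) \<circ> r) \<longlonglongrightarrow> l"
    using 0 unfolding seq_compact_def by (metis order_refl)
  thus ?case by (intro exI[of _ r] exI[of _ "\<lambda>_. l"]) (auto simp: o_def)
next
  case (Suc m)
  then obtain r l where r: "strict_mono r" "\<forall>i\<le>m. l i \<in> K \<and> (\<lambda>j. s (r j) i) \<longlonglongrightarrow> l i" by auto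
  have "seq_compact K" using assms(1) by (simp add: compact_imp_seq_compact)
  then obtain l' r' where l': "l' \<in> K" "strict_mono r'" "((\<lambda>j. s (r j) (Suc m)) \<circ> r') \<longlonglongrightarrow> l'"
    using Suc.prems unfolding seq_compact_def by (metis order_refl)
  show ?case
  proof (intro exI[of _ "r \<circ> r'"] exI[of _ "l(Suc m := l')"] conjI allI impI)
    show "strict_mono (r \<circ> r')" using r l' by (simp add: strict_mono_o)
    fix i assume i: "i \<le> Suc m"
    show "(l(Suc m := l')) i \<in> K" using i r l' by (cases "i = Suc m") auto
    show "(\<lambda>j. s ((r \<circ> r') j) i) \<longlonglongrightarrow> (l(Suc m := l')) i"
    proof (cases "i = Suc m")
      case True thus ?thesis using l' by (simp add: o_def)
    next
      case False
      hence "(\<lambda>j. s (r j) i) \<longlonglongrightarrow> l i" using i r by auto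
      from LIMSEQ_subseq_LIMSEQ[OF this l'(2)] show ?thesis using False by (simp add: o_def)
    qed
  qed
qed

lemma comb:
  "\<forall>b a. b \<in> K \<longrightarrow> (\<forall>i\<le>Suc m. a i \<in> K) \<longrightarrow> b \<noteq> a 0 \<longrightarrow> fst b = fst (a 0) \<longrightarrow>
     (\<forall>i\<le>m. fst (a i) = fst (a (Suc i)) \<or> snd (a i) = snd (a (Suc i))) \<longrightarrow>
     a m \<noteq> a (Suc m) \<longrightarrow> snd (a m) = snd (a (Suc m)) \<longrightarrow>
     (\<exists>a1\<in>K. \<exists>a2\<in>K. \<exists>a3\<in>K. is_array a1 a2 a3)"
proof (induction m)
  case 0
  show ?case
  proof (intro allI impI)
    fix b a assume h: "b \<in> K" "\<forall>i\<le>Suc 0. a i \<in> K" "b \<noteq> a 0" "fst b = fst (a 0)"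
      "a 0 \<noteq> a (Suc 0)" "snd (a 0) = snd (a (Suc 0))"
    have "is_array b (a 0) (a 1)" using h by (simp add: is_array_def)
    thus "\<exists>a1\<in>K. \<exists>a2\<in>K. \<exists>a3\<in>K. is_array a1 a2 a3" using h by (metis le_refl zero_le One_nat_def)
  qed
next
  case (Suc m)
  show ?case
  proof (intro allI impI)
    fix b a assume h: "b \<in> K" "\<forall>i\<le>Suc (Suc m). a i \<in> K" "b \<noteq> a 0" "fst b = fst (a 0)"
      "\<forall>i\<le>Suc m. fst (a i) = fst (a (Suc i)) \<or> snd (a i) = snd (a (Suc i))"
      "a (Suc m) \<noteq> a (Suc (Suc m))" "snd (a (Suc m)) = snd (a (Suc (Suc m)))"
    define a' where "a' = (\<lambda>i. a (Suc i))"
    have A: "\<forall>i\<le>Suc m. a' i \<in> K" using h(2) by (simp add: a'_def)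
    have B: "\<forall>i\<le>m. fst (a' i) = fst (a' (Suc i)) \<or> snd (a' i) = snd (a' (Suc i))" using h(5) by (simp add: a'_def)
    have C: "a' m \<noteq> a' (Suc m)" "snd (a' m) = snd (a' (Suc m))" using h(6,7) by (simp_all add: a'_def)
    have a0K: "a 0 \<in> K" "a 1 \<in> K" using h(2) by auto
    have st: "fst (a 0) = fst (a 1) \<or> snd (a 0) = snd (a 1)" using h(5) by auto
    show "\<exists>a1\<in>K. \<exists>a2\<in>K. \<exists>a3\<in>K. is_array a1 a2 a3"
    proof (cases "a 0 = a 1")
      case True
      show ?thesis using Suc.IH[rule_format, of b a'] h(1,3,4) A B C True by (simp add: a'_def)
    next
      case ne: False
      show ?thesis
      proof (cases "snd (a 0) = snd (a 1)")
        case True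
        hence "is_array b (a 0) (a 1)" using ne h by (simp add: is_array_def)
        thus ?thesis using h(1) a0K by blast
      next
        case False
        hence f: "fst (a 0) = fst (a 1)" using st by auto
        define b' where "b' = (if b = a 1 then a 0 else b)"
        have "b' \<in> K" "b' \<noteq> a' 0" "fst b' = fst (a' 0)" using h(1,3,4) a0K ne f by (auto simp: b'_def a'_def)
        thus ?thesis using Suc.IH[rule_format, of b' a'] A B C by blast
      qed
    qed
  qed
qed

lemma edge_verts: "edge n K u1 u2 \<Longrightarrow> u1 \<in> verts n K \<and> u2 \<in> verts n K"
  by (simp add: edge_def)

lemma lim_aligned:
  fixes S :: "nat \<Rightarrow> real \<times> real" and T :: "nat \<Rightarrow> real \<times> real"
  assumes "S \<longlonglongrightarrow> a" "T \<longlonglongrightarrow> b"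
    and "\<forall>j. min \<bar>fst (S j) - fst (T j)\<bar> \<bar>snd (S j) - snd (T j)\<bar> \<le> c / 2^j"
  shows "fst a = fst b \<or> snd a = snd b"
proof -
  have "(\<lambda>j. min \<bar>fst (S j) - fst (T j)\<bar> \<bar>snd (S j) - snd (T j)\<bar>) \<longlonglongrightarrow> min \<bar>fst a - fst b\<bar> \<bar>snd a - snd b\<bar>"
    using assms(1,2) by (intro tendsto_intros)
  from LIMSEQ_le[OF this pow_lim[of c]] assms(3)
  have "min \<bar>fst a - fst b\<bar> \<bar>snd a - snd b\<bar> \<le> 0" by blast
  thus ?thesis by (auto simp: min_def split: if_splits)
qed

lemma lim_fst:
  fixes S :: "nat \<Rightarrow> real \<times> real" and T :: "nat \<Rightarrow> real \<times> real"
  assumes "S \<longlonglongrightarrow> a" "T \<longlonglongrightarrow> b"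
    and "\<forall>j. \<bar>fst (S j) - fst (T j)\<bar> \<le> c / 2^j"
  shows "fst a = fst b"
proof -
  have "(\<lambda>j. \<bar>fst (S j) - fst (T j)\<bar>) \<longlonglongrightarrow> \<bar>fst a - fst b\<bar>"
    using assms(1,2) by (intro tendsto_intros)
  from LIMSEQ_le[OF this pow_lim[of c]] assms(3)
  have "\<bar>fst a - fst b\<bar> \<le> 0" by blast
  thus ?thesis by auto
qed

lemma lim_snd:
  fixes S :: "nat \<Rightarrow> real \<times> real" and T :: "nat \<Rightarrow> real \<times> real"
  assumes "S \<longlonglongrightarrow> a" "T \<longlonglongrightarrow> b"
    and "\<forall>j. \<bar>snd (S j) - snd (T j)\<bar> \<le> c / 2^j"
  shows "snd a = snd b"
proof -
  have "(\<lambda>j. \<bar>snd (S j) - snd (T j)\<bar>) \<longlonglongrightarrow> \<bar>snd a - snd b\<bar>"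
    using assms(1,2) by (intro tendsto_intros)
  from LIMSEQ_le[OF this pow_lim[of c]] assms(3)
  have "\<bar>snd a - snd b\<bar> \<le> 0" by blast
  thus ?thesis by auto
qed

lemma lim_ne:
  fixes S :: "nat \<Rightarrow> real \<times> real" and T :: "nat \<Rightarrow> real \<times> real"
  assumes "S \<longlonglongrightarrow> a" "T \<longlonglongrightarrow> b" "0 < d"
    and "\<forall>j. d - c / 2^j \<le> norm (S j - T j)"
  shows "a \<noteq> b"
proof -
  have "(\<lambda>j. norm (S j - T j)) \<longlonglongrightarrow> norm (a - b)"
    using assms(1,2) by (intro tendsto_intros)
  moreover have "(\<lambda>j. d - c / 2^j) \<longlonglongrightarrow> d"
    using tendsto_diff[OF tendsto_const pow_lim[of c], of d] by simp
  ultimately have "d \<le> norm (a - b)" using LIMSEQ_le[of "\<lambda>j. d - c / 2^j" d] assms(4) by blast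
  thus ?thesis using assms(3) by auto
qed

lemma pow_mono_le: "j \<le> n \<Longrightarrow> 0 \<le> c \<Longrightarrow> c / 2^n \<le> (c::real) / 2^j"
  by (intro divide_left_mono) (auto intro: power_increasing)

lemma no_long_chain:
  assumes K: "compact K" "no_array K" and d: "\<delta> > 0"
  shows "\<exists>n0. \<forall>n\<ge>n0. \<forall>x C. (\<forall>u\<in>verts n K. x u \<in> K \<inter> sq n u) \<longrightarrow>
     (\<forall>i\<le>m. edge n K (C (Suc i)) (C (Suc (Suc i)))) \<longrightarrow>
     long_vert_edge n K \<delta> (C 0) (C 1) \<longrightarrow> \<not> long_hor_edge n K \<delta> (C (Suc m)) (C (Suc (Suc m)))"
proof (rule ccontr)
  assume a: "\<not> ?thesis"
  define Q where "Q n x C \<longleftrightarrow> (\<forall>u\<in>verts n K. x u \<in> K \<inter> sq n u) \<and>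
     (\<forall>i\<le>m. edge n K (C (Suc i)) (C (Suc (Suc i)))) \<and>
     long_vert_edge n K \<delta> (C 0) (C 1) \<and> long_hor_edge n K \<delta> (C (Suc m)) (C (Suc (Suc m)))"
    for n and x :: "real \<times> real \<Rightarrow> real \<times> real" and C :: "nat \<Rightarrow> real \<times> real"
  have ex: "\<forall>j. \<exists>t. j \<le> fst t \<and> Q (fst t) (fst (snd t)) (snd (snd t))"
  proof
    fix j
    have "\<exists>n x C. j \<le> n \<and> Q n x C"
    proof (rule ccontr)
      assume b: "\<not> (\<exists>n x C. j \<le> n \<and> Q n x C)"
      have "\<forall>n\<ge>j. \<forall>x C. (\<forall>u\<in>verts n K. x u \<in> K \<inter> sq n u) \<longrightarrow>
     (\<forall>i\<le>m. edge n K (C (Suc i)) (C (Suc (Suc i)))) \<longrightarrow>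
     long_vert_edge n K \<delta> (C 0) (C 1) \<longrightarrow> \<not> long_hor_edge n K \<delta> (C (Suc m)) (C (Suc (Suc m)))"
      proof (intro allI impI notI)
        fix n x C assume "j \<le> n" "\<forall>u\<in>verts n K. x u \<in> K \<inter> sq n u"
          "\<forall>i\<le>m. edge n K (C (Suc i)) (C (Suc (Suc i)))" "long_vert_edge n K \<delta> (C 0) (C 1)"
          "long_hor_edge n K \<delta> (C (Suc m)) (C (Suc (Suc m)))"
        hence "j \<le> n \<and> Q n x C" unfolding Q_def by simp
        thus False using b by blast
      qed
      hence "\<exists>n0. \<forall>n\<ge>n0. \<forall>x C. (\<forall>u\<in>verts n K. x u \<in> K \<inter> sq n u) \<longrightarrow> (\<forall>i\<le>m. edge n K (C (Suc i)) (C (Suc (Suc i)))) \<longrightarrow> long_vert_edge n K \<delta> (C 0) (C 1) \<longrightarrow> \<not> long_hor_edge n K \<delta> (C (Suc m)) (C (Suc (Suc m)))" by (rule exI)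
      from a this show False by (rule notE)
    qed
    then obtain n x C where "j \<le> n \<and> Q n x C" by blast
    thus "\<exists>t. j \<le> fst t \<and> Q (fst t) (fst (snd t)) (snd (snd t))" by (intro exI[of _ "(n,x,C)"]) simp
  qed
  from choice[OF ex] obtain F where F: "\<And>j. j \<le> fst (F j) \<and> Q (fst (F j)) (fst (snd (F j))) (snd (snd (F j)))" by blast
  define N where "N j = fst (F j)" for j
  define X where "X j = fst (snd (F j))" for j
  define CC where "CC j = snd (snd (F j))" for j
  have H: "N j \<ge> j \<and> (\<forall>u\<in>verts (N j) K. X j u \<in> K \<inter> sq (N j) u) \<and>
     (\<forall>i\<le>m. edge (N j) K (CC j (Suc i)) (CC j (Suc (Suc i)))) \<and>
     long_vert_edge (N j) K \<delta> (CC j 0) (CC j 1) \<and> long_hor_edge (N j) K \<delta> (CC j (Suc m)) (CC j (Suc (Suc m)))" for j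
    using F[of j] unfolding Q_def N_def X_def CC_def by blast
  have V: "CC j i \<in> verts (N j) K" if "i \<le> Suc (Suc m)" for j i
  proof -
    have lv: "edge (N j) K (CC j 0) (CC j 1)" using H[of j] by (simp add: long_vert_edge_def vertical_edge_def)
    show ?thesis
    proof (cases i)
      case 0 thus ?thesis using lv edge_verts by blast
    next
      case (Suc i')
      show ?thesis
      proof (cases i')
        case 0 thus ?thesis using lv edge_verts Suc by auto
      next
        case (Suc i'')
        hence "i'' \<le> m" using that \<open>i = Suc i'\<close> by auto
        thus ?thesis using H[of j] edge_verts Suc \<open>i = Suc i'\<close> by blast
      qed
    qed
  qed
  define s where "s j i = X j (CC j i)" for j i
  have sK: "\<forall>j. \<forall>i\<le>Suc (Suc m). s j i \<in> K"
  proof (intro allI impI)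
    fix j i assume "i \<le> Suc (Suc m)"
    hence "CC j i \<in> verts (N j) K" by (rule V)
    moreover have "\<forall>u\<in>verts (N j) K. X j u \<in> K \<inter> sq (N j) u" using H[of j] by blast
    ultimately show "s j i \<in> K" unfolding s_def by blast
  qed
  obtain r l where r: "strict_mono r" "\<forall>i\<le>Suc (Suc m). l i \<in> K \<and> (\<lambda>j. s (r j) i) \<longlonglongrightarrow> l i"
    using multi_subseq[OF K(1) sK] by blast
  have Nr: "N (r j) \<ge> j" for j using H[of "r j"] seq_suble[OF r(1), of j] by linarith
  have ep: "1 / 2 ^ N (r j) \<le> (1::real) / 2^j" for j using Nr[of j] by (intro pow_mono_le) auto
  have edge_b: "min \<bar>fst (s (r j) a) - fst (s (r j) b)\<bar> \<bar>snd (s (r j) a) - snd (s (r j) b)\<bar> \<le> 2 / 2^j"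
    if "edge (N (r j)) K (CC (r j) a) (CC (r j) b)" for j a b
  proof -
    let ?n = "N (r j)"
    have vv: "CC (r j) a \<in> verts ?n K" "CC (r j) b \<in> verts ?n K" using that edge_verts by auto
    note P = pert[OF conjunct1[OF conjunct2[OF H[of "r j"]]] vv]
    have "\<bar>fst (CC (r j) a) - fst (CC (r j) b)\<bar> \<le> 1/2^?n \<or> \<bar>snd (CC (r j) a) - snd (CC (r j) b)\<bar> \<le> 1/2^?n"
      using that by (simp add: edge_def)
    thus ?thesis using P(1,2) ep[of j] unfolding s_def by (auto simp: min_def)
  qed
  have al: "fst (l i) = fst (l (Suc i)) \<or> snd (l i) = snd (l (Suc i))" if i1: "1 \<le> i" "i \<le> Suc m" for i
  proof -
    obtain i' where i': "i = Suc i'" "i' \<le> m" using i1 by (cases i) auto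
    show ?thesis
    proof (rule lim_aligned[of "\<lambda>j. s (r j) i" _ "\<lambda>j. s (r j) (Suc i)" _ 2])
      show "(\<lambda>j. s (r j) i) \<longlonglongrightarrow> l i" "(\<lambda>j. s (r j) (Suc i)) \<longlonglongrightarrow> l (Suc i)" using r(2) i1 by auto
      show "\<forall>j. min \<bar>fst (s (r j) i) - fst (s (r j) (Suc i))\<bar> \<bar>snd (s (r j) i) - snd (s (r j) (Suc i))\<bar> \<le> 2 / 2 ^ j"
      proof
        fix j
        have "edge (N (r j)) K (CC (r j) (Suc i')) (CC (r j) (Suc (Suc i')))" using H[of "r j"] i'(2) by blast
        thus "min \<bar>fst (s (r j) i) - fst (s (r j) (Suc i))\<bar> \<bar>snd (s (r j) i) - snd (s (r j) (Suc i))\<bar> \<le> 2 / 2 ^ j"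
          unfolding i'(1) by (rule edge_b)
      qed
    qed
  qed
  have v0: "fst (l 0) = fst (l 1)"
  proof (rule lim_fst[of "\<lambda>j. s (r j) 0" _ "\<lambda>j. s (r j) 1" _ 2])
    show "(\<lambda>j. s (r j) 0) \<longlonglongrightarrow> l 0" "(\<lambda>j. s (r j) 1) \<longlonglongrightarrow> l 1" using r(2) by auto
    show "\<forall>j. \<bar>fst (s (r j) 0) - fst (s (r j) 1)\<bar> \<le> 2 / 2 ^ j"
    proof
      fix j
      have h: "long_vert_edge (N (r j)) K \<delta> (CC (r j) 0) (CC (r j) 1)" using H by blast
      hence vv: "CC (r j) 0 \<in> verts (N (r j)) K" "CC (r j) 1 \<in> verts (N (r j)) K"
        by (auto simp: long_vert_edge_def vertical_edge_def edge_def)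
      note P = pert[OF conjunct1[OF conjunct2[OF H[of "r j"]]] vv]
      show "\<bar>fst (s (r j) 0) - fst (s (r j) 1)\<bar> \<le> 2 / 2 ^ j"
        using P(1) h ep[of j] unfolding s_def by (auto simp: long_vert_edge_def vertical_edge_def)
    qed
  qed
  have v1: "l 0 \<noteq> l 1"
  proof (rule lim_ne[of "\<lambda>j. s (r j) 0" _ "\<lambda>j. s (r j) 1" _ \<delta> 4])
    show "(\<lambda>j. s (r j) 0) \<longlonglongrightarrow> l 0" "(\<lambda>j. s (r j) 1) \<longlonglongrightarrow> l 1" using r(2) by auto
    show "0 < \<delta>" by fact
    show "\<forall>j. \<delta> - 4 / 2 ^ j \<le> norm (s (r j) 0 - s (r j) 1)"
    proof
      fix j
      have h: "long_vert_edge (N (r j)) K \<delta> (CC (r j) 0) (CC (r j) 1)" using H by blast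
      hence vv: "CC (r j) 0 \<in> verts (N (r j)) K" "CC (r j) 1 \<in> verts (N (r j)) K"
        by (auto simp: long_vert_edge_def vertical_edge_def edge_def)
      note P = pert[OF conjunct1[OF conjunct2[OF H[of "r j"]]] vv]
      show "\<delta> - 4 / 2 ^ j \<le> norm (s (r j) 0 - s (r j) 1)"
        using P(4) h ep[of j] unfolding s_def by (auto simp: long_vert_edge_def)
    qed
  qed
  have h0: "snd (l (Suc m)) = snd (l (Suc (Suc m)))"
  proof (rule lim_snd[of "\<lambda>j. s (r j) (Suc m)" _ "\<lambda>j. s (r j) (Suc (Suc m))" _ 2])
    show "(\<lambda>j. s (r j) (Suc m)) \<longlonglongrightarrow> l (Suc m)" "(\<lambda>j. s (r j) (Suc (Suc m))) \<longlonglongrightarrow> l (Suc (Suc m))" using r(2) by auto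
    show "\<forall>j. \<bar>snd (s (r j) (Suc m)) - snd (s (r j) (Suc (Suc m)))\<bar> \<le> 2 / 2 ^ j"
    proof
      fix j
      have h: "long_hor_edge (N (r j)) K \<delta> (CC (r j) (Suc m)) (CC (r j) (Suc (Suc m)))" using H by blast
      hence vv: "CC (r j) (Suc m) \<in> verts (N (r j)) K" "CC (r j) (Suc (Suc m)) \<in> verts (N (r j)) K"
        by (auto simp: long_hor_edge_def horizontal_edge_def edge_def)
      note P = pert[OF conjunct1[OF conjunct2[OF H[of "r j"]]] vv]
      show "\<bar>snd (s (r j) (Suc m)) - snd (s (r j) (Suc (Suc m)))\<bar> \<le> 2 / 2 ^ j"
        using P(2) h ep[of j] unfolding s_def by (auto simp: long_hor_edge_def horizontal_edge_def)
    qed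
  qed
  have h1: "l (Suc m) \<noteq> l (Suc (Suc m))"
  proof (rule lim_ne[of "\<lambda>j. s (r j) (Suc m)" _ "\<lambda>j. s (r j) (Suc (Suc m))" _ \<delta> 4])
    show "(\<lambda>j. s (r j) (Suc m)) \<longlonglongrightarrow> l (Suc m)" "(\<lambda>j. s (r j) (Suc (Suc m))) \<longlonglongrightarrow> l (Suc (Suc m))" using r(2) by auto
    show "0 < \<delta>" by fact
    show "\<forall>j. \<delta> - 4 / 2 ^ j \<le> norm (s (r j) (Suc m) - s (r j) (Suc (Suc m)))"
    proof
      fix j
      have h: "long_hor_edge (N (r j)) K \<delta> (CC (r j) (Suc m)) (CC (r j) (Suc (Suc m)))" using H by blast
      hence vv: "CC (r j) (Suc m) \<in> verts (N (r j)) K" "CC (r j) (Suc (Suc m)) \<in> verts (N (r j)) K"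
        by (auto simp: long_hor_edge_def horizontal_edge_def edge_def)
      note P = pert[OF conjunct1[OF conjunct2[OF H[of "r j"]]] vv]
      show "\<delta> - 4 / 2 ^ j \<le> norm (s (r j) (Suc m) - s (r j) (Suc (Suc m)))"
        using P(4) h ep[of j] unfolding s_def by (auto simp: long_hor_edge_def)
    qed
  qed
  have c1: "l 0 \<in> K" using r(2) by auto
  have c2: "\<forall>i\<le>Suc m. (\<lambda>i. l (Suc i)) i \<in> K" using r(2) by auto
  have c3: "l 0 \<noteq> (\<lambda>i. l (Suc i)) 0" "fst (l 0) = fst ((\<lambda>i. l (Suc i)) 0)" using v0 v1 by auto
  have c4: "\<forall>i\<le>m. fst ((\<lambda>i. l (Suc i)) i) = fst ((\<lambda>i. l (Suc i)) (Suc i)) \<or> snd ((\<lambda>i. l (Suc i)) i) = snd ((\<lambda>i. l (Suc i)) (Suc i))"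
    using al by auto
  have c5: "(\<lambda>i. l (Suc i)) m \<noteq> (\<lambda>i. l (Suc i)) (Suc m)" "snd ((\<lambda>i. l (Suc i)) m) = snd ((\<lambda>i. l (Suc i)) (Suc m))" using h0 h1 by auto
  have "\<exists>a1\<in>K. \<exists>a2\<in>K. \<exists>a3\<in>K. is_array a1 a2 a3"
    using mp[OF mp[OF mp[OF mp[OF mp[OF mp[OF mp[OF spec[OF spec[OF comb[of K m], of "l 0"], of "\<lambda>i. l (Suc i)"] c1] c2] c3(1)] c3(2)] c4] c5(1)] c5(2)] .
  thus False using K(2) by (simp add: no_array_def)
qed

lemma clip:
  fixes t s a b e :: real
  assumes "\<bar>t - s\<bar> \<le> e" "\<bar>a - b\<bar> \<le> e" "0 \<le> a" "0 \<le> b"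
  shows "\<bar>max (-a) (min t a) - max (-b) (min s b)\<bar> \<le> e"
  using assms unfolding max_def min_def by (auto split: if_splits)

lemma clip_le: "0 \<le> (a::real) \<Longrightarrow> \<bar>max (-a) (min t a)\<bar> \<le> \<bar>t\<bar>"
  unfolding max_def min_def by auto

lemma clip_id: "\<bar>t\<bar> \<le> (a::real) \<Longrightarrow> max (-a) (min t a) = t"
  unfolding max_def min_def by auto

lemma max_mono_fin:
  assumes "finite V" "\<forall>u\<in>V. \<bar>g u\<bar> \<le> \<bar>h u\<bar>"
  shows "(MAX u\<in>V. \<bar>g u\<bar>) \<le> (MAX u\<in>V. \<bar>h u :: real\<bar>)"
proof (cases "V = {}")
  case True thus ?thesis by simp
next
  case False
  show ?thesis
  proof (subst Max_le_iff)
    show "finite ((\<lambda>u. \<bar>g u\<bar>) ` V)" "(\<lambda>u. \<bar>g u\<bar>) ` V \<noteq> {}" using assms(1) False by auto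
    show "\<forall>a\<in>(\<lambda>u. \<bar>g u\<bar>) ` V. a \<le> (MAX u\<in>V. \<bar>h u\<bar>)"
    proof
      fix a assume "a \<in> (\<lambda>u. \<bar>g u\<bar>) ` V"
      then obtain u where u: "u \<in> V" "a = \<bar>g u\<bar>" by blast
      have "\<bar>h u\<bar> \<le> (MAX u\<in>V. \<bar>h u\<bar>)" using assms(1) u(1) by (intro Max_ge) auto
      thus "a \<le> (MAX u\<in>V. \<bar>h u\<bar>)" using assms(2) u by force
    qed
  qed
qed

lemma finite_verts:
  assumes "compact K" shows "finite (verts n K)"
proof -
  obtain R where R: "\<forall>y\<in>K. norm y \<le> R" using compact_imp_bounded[OF assms] unfolding bounded_iff by blast
  define B where "B = \<lceil>R * 2^n\<rceil> + 1"
  have key: "-B \<le> i \<and> i \<le> B" if "real_of_int i / 2^n \<le> c" "c < real_of_int i / 2^n + 1/2^n" "\<bar>c\<bar> \<le> R" for i c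
  proof -
    have p: "(0::real) < 2^n" by simp
    have "real_of_int i \<le> c * 2^n" using that(1) p by (simp add: divide_le_eq)
    moreover have "c * 2^n < real_of_int i + 1" using that(2) p
      by (simp add: add_divide_distrib[symmetric] less_divide_eq)
    moreover have "\<bar>c * 2^n\<bar> \<le> R * 2^n" using that(3) p by (simp add: abs_mult)
    ultimately have "real_of_int i \<le> R * 2^n" "- R * 2^n - 1 < real_of_int i" by linarith+
    moreover have "R * 2^n \<le> real_of_int \<lceil>R * 2^n\<rceil>" by (rule le_of_int_ceiling)
    ultimately show ?thesis unfolding B_def by linarith
  qed
  have "verts n K \<subseteq> (\<lambda>(i,j). (real_of_int i / 2^n, real_of_int j / 2^n)) ` ({-B..B} \<times> {-B..B})"
  proof
    fix u assume "u \<in> verts n K"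
    then obtain i j y where u: "u = (real_of_int i / 2^n, real_of_int j / 2^n)" "y \<in> sq n u" "y \<in> K"
      unfolding verts_def by blast
    have "\<bar>fst y\<bar> \<le> R" "\<bar>snd y\<bar> \<le> R" using R u(3) norm_fst_le[of "fst y" "snd y"] norm_snd_le[of "snd y" "fst y"] by auto
    hence "-B \<le> i \<and> i \<le> B" "-B \<le> j \<and> j \<le> B" using key u(2) unfolding u(1) sq_def by auto
    thus "u \<in> (\<lambda>(i,j). (real_of_int i / 2^n, real_of_int j / 2^n)) ` ({-B..B} \<times> {-B..B})"
      using u(1) by force
  qed
  thus ?thesis by (rule finite_subset) auto
qed

theorem mainTheorem5:
  fixes K :: "(real \<times> real) set" and f :: "real \<times> real \<Rightarrow> real" and \<epsilon> \<delta> :: real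
  assumes "compact K" and "no_array K"
    and "continuous_on K f" and "\<epsilon> > 0" and "\<delta> > 0"
    and "\<forall>x1\<in>K. \<forall>x2\<in>K. norm (x1 - x2) < 2 * \<delta> \<longrightarrow> \<bar>f x1 - f x2\<bar> < \<epsilon>"
  shows "\<exists>n0::nat. \<forall>n\<ge>n0. \<forall>x :: real \<times> real \<Rightarrow> real \<times> real.
           (\<forall>u\<in>verts n K. x u \<in> K \<inter> sq n u) \<longrightarrow>
           (let fn = (\<lambda>u. f (x u)) in
            \<exists>g :: real \<times> real \<Rightarrow> real.
              (\<forall>u1 u2. short_edge n K \<delta> u1 u2 \<longrightarrow> \<bar>g u1 - g u2\<bar> \<le> \<epsilon>) \<and>
              (\<forall>u1 u2. long_hor_edge n K \<delta> u1 u2 \<longrightarrow>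
                   \<bar>fn u1 - g u1\<bar> \<le> \<epsilon> \<and> \<bar>fn u2 - g u2\<bar> \<le> \<epsilon>) \<and>
              (\<forall>u1 u2. long_vert_edge n K \<delta> u1 u2 \<longrightarrow> g u1 = 0 \<and> g u2 = 0) \<and>
              (MAX u\<in>verts n K. \<bar>g u\<bar>) \<le> (MAX u\<in>verts n K. \<bar>fn u\<bar>))"
proof -
  note K = assms(1,2) and eps = assms(4) and del = assms(5) and uc = assms(6)
  obtain M0 where M0: "\<forall>y\<in>f ` K. norm y \<le> M0"
    using compact_imp_bounded[OF compact_continuous_image[OF assms(3) assms(1)]] unfolding bounded_iff by blast
  define M where "M = max M0 0"
  have M: "\<forall>y\<in>K. \<bar>f y\<bar> \<le> M" using M0 unfolding M_def by force
  define L where "L = nat \<lceil>M / \<epsilon>\<rceil>"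
  have Mle: "M \<le> \<epsilon> * real L"
  proof -
    have "M / \<epsilon> \<le> real L" unfolding L_def by linarith
    thus ?thesis using eps by (simp add: divide_le_eq mult.commute)
  qed
  have "\<forall>k. \<exists>n0. \<forall>n\<ge>n0. \<forall>x C. (\<forall>u\<in>verts n K. x u \<in> K \<inter> sq n u) \<longrightarrow>
     (\<forall>i\<le>k. edge n K (C (Suc i)) (C (Suc (Suc i)))) \<longrightarrow>
     long_vert_edge n K \<delta> (C 0) (C 1) \<longrightarrow> \<not> long_hor_edge n K \<delta> (C (Suc k)) (C (Suc (Suc k)))"
    using no_long_chain[OF K del] by blast
  from choice[OF this] obtain N0 where N0: "\<And>k. \<forall>n\<ge>N0 k. \<forall>x C. (\<forall>u\<in>verts n K. x u \<in> K \<inter> sq n u) \<longrightarrow>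
     (\<forall>i\<le>k. edge n K (C (Suc i)) (C (Suc (Suc i)))) \<longrightarrow>
     long_vert_edge n K \<delta> (C 0) (C 1) \<longrightarrow> \<not> long_hor_edge n K \<delta> (C (Suc k)) (C (Suc (Suc k)))"
    by blast
  obtain n1 where n1: "\<forall>n\<ge>n1. norm ((4::real) / 2^n - 0) < \<delta>"
    using LIMSEQ_D[OF pow_lim[of 4] del] by blast
  define n0 where "n0 = max n1 (Max (N0 ` {..L}))"
  show ?thesis
  proof (intro exI[of _ n0] allI impI)
    fix n x assume n: "n0 \<le> n" and xv: "\<forall>u\<in>verts n K. x u \<in> K \<inter> sq n u"
    define fn where "fn u = f (x u)" for u
    have small: "4 / 2^n < \<delta>" using n1 n unfolding n0_def by auto
    have nk: "N0 k \<le> n" if "k \<le> L" for k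
    proof -
      have "N0 k \<le> Max (N0 ` {..L})" using that by (intro Max_ge) auto
      thus ?thesis using n that unfolding n0_def by auto
    qed
    define V0 where "V0 = {u. \<exists>w. long_vert_edge n K \<delta> u w}"
    define reach where "reach k u \<longleftrightarrow> (\<exists>c. c 0 \<in> V0 \<and> c k = u \<and> (\<forall>i<k. short_edge n K \<delta> (c i) (c (Suc i))))" for k u
    define S where "S u = {k. k \<le> L \<and> reach k u} \<union> {L}" for u
    define rr where "rr u = Min (S u)" for u
    have finS: "finite (S u)" for u
      unfolding S_def by (rule finite_UnI) (auto intro: finite_subset[of _ "{..L}"])
    have rrL: "rr u \<le> L" for u unfolding rr_def using finS by (intro Min_le) (auto simp: S_def)
    have rrk: "rr u \<le> k" if "k \<le> L" "reach k u" for u k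
      unfolding rr_def using finS that by (intro Min_le) (auto simp: S_def)
    have rrin: "rr u \<in> S u" for u unfolding rr_def using finS by (intro Min_in) (auto simp: S_def)
    have reach_step: "reach (Suc k) u1" if r: "reach k u2" and se: "short_edge n K \<delta> u2 u1" for k u1 u2
    proof -
      obtain c where c: "c 0 \<in> V0" "c k = u2" "\<forall>i<k. short_edge n K \<delta> (c i) (c (Suc i))"
        using r unfolding reach_def by blast
      define c' where "c' = c(Suc k := u1)"
      have "c' 0 \<in> V0" "c' (Suc k) = u1" using c unfolding c'_def by auto
      moreover have "\<forall>i<Suc k. short_edge n K \<delta> (c' i) (c' (Suc i))"
      proof (intro allI impI)
        fix i assume "i < Suc k"
        thus "short_edge n K \<delta> (c' i) (c' (Suc i))"
          using c se unfolding c'_def by (cases "i = k") auto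
      qed
      ultimately show ?thesis unfolding reach_def by blast
    qed
    have rr_step: "rr u1 \<le> rr u2 + 1" if "short_edge n K \<delta> u2 u1" for u1 u2
    proof -
      have "rr u2 \<in> S u2" by (rule rrin)
      hence "rr u2 = L \<or> (rr u2 \<le> L \<and> reach (rr u2) u2)" unfolding S_def by auto
      thus ?thesis
      proof
        assume "rr u2 = L" thus ?thesis using rrL[of u1] by simp
      next
        assume h: "rr u2 \<le> L \<and> reach (rr u2) u2"
        hence r1: "reach (Suc (rr u2)) u1" using reach_step that by blast
        show ?thesis
        proof (cases "Suc (rr u2) \<le> L")
          case True thus ?thesis using rrk[OF True r1] by simp
        next
          case False thus ?thesis using rrL[of u1] by simp
        qed
      qed
    qed
    have rr0: "rr u = 0" if "u \<in> V0" for u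
    proof -
      have "reach 0 u" unfolding reach_def using that by (intro exI[of _ "\<lambda>_. u"]) auto
      thus ?thesis using rrk[of 0 u] by simp
    qed
    have rrH: "rr h = L" if "long_hor_edge n K \<delta> h h'" for h h'
    proof -
      have nr: "\<not> reach k h" if kL: "k \<le> L" for k
      proof
        assume "reach k h"
        then obtain c where c: "c 0 \<in> V0" "c k = h" "\<forall>i<k. short_edge n K \<delta> (c i) (c (Suc i))"
          unfolding reach_def by blast
        obtain w where w: "long_vert_edge n K \<delta> (c 0) w" using c(1) unfolding V0_def by blast
        define C where "C i = (if i = 0 then w else if i \<le> Suc k then c (i - 1) else h')" for i
        have e1: "\<forall>i\<le>k. edge n K (C (Suc i)) (C (Suc (Suc i)))"
        proof (intro allI impI)
          fix i assume i: "i \<le> k"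
          show "edge n K (C (Suc i)) (C (Suc (Suc i)))"
          proof (cases "i = k")
            case True
            thus ?thesis using \<open>long_hor_edge n K \<delta> h h'\<close> c(2)
              unfolding C_def long_hor_edge_def horizontal_edge_def by simp
          next
            case False
            hence "i < k" using i by simp
            thus ?thesis using c(3) unfolding C_def short_edge_def by auto
          qed
        qed
        have e2: "long_vert_edge n K \<delta> (C 0) (C 1)" using lvert_sym[OF w] unfolding C_def by simp
        have e3: "long_hor_edge n K \<delta> (C (Suc k)) (C (Suc (Suc k)))"
          using \<open>long_hor_edge n K \<delta> h h'\<close> c(2) unfolding C_def by simp
        show False using N0[of k] nk[OF kL] xv e1 e2 e3 by blast
      qed
      have "S h = {L}" unfolding S_def using nr by auto
      thus ?thesis unfolding rr_def by simp
    qed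
    define g where "g u = max (-(\<epsilon> * real (rr u))) (min (fn u) (\<epsilon> * real (rr u)))" for u
    have "(\<forall>u1 u2. short_edge n K \<delta> u1 u2 \<longrightarrow> \<bar>g u1 - g u2\<bar> \<le> \<epsilon>)"
    proof (intro allI impI)
      fix u1 u2 assume se: "short_edge n K \<delta> u1 u2"
      have vv: "u1 \<in> verts n K" "u2 \<in> verts n K" using se by (auto simp: short_edge_def edge_def)
      have "norm (x u1 - x u2) < 2 * \<delta>" using pert(3)[OF xv vv] se small by (simp add: short_edge_def)
      hence "\<bar>fn u1 - fn u2\<bar> \<le> \<epsilon>" using uc xv vv unfolding fn_def by force
      moreover have "\<bar>\<epsilon> * real (rr u1) - \<epsilon> * real (rr u2)\<bar> \<le> \<epsilon>"
      proof -
        have "rr u1 \<le> rr u2 + 1" "rr u2 \<le> rr u1 + 1" using rr_step se short_sym by blast+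
        hence "\<bar>real (rr u1) - real (rr u2)\<bar> \<le> 1" by linarith
        hence "\<epsilon> * \<bar>real (rr u1) - real (rr u2)\<bar> \<le> \<epsilon> * 1" using eps by (intro mult_left_mono) auto
        thus ?thesis using eps by (simp add: abs_mult right_diff_distrib[symmetric])
      qed
      ultimately show "\<bar>g u1 - g u2\<bar> \<le> \<epsilon>" unfolding g_def using eps by (intro clip) auto
    qed
    moreover have "\<forall>u1 u2. long_hor_edge n K \<delta> u1 u2 \<longrightarrow> \<bar>fn u1 - g u1\<bar> \<le> \<epsilon> \<and> \<bar>fn u2 - g u2\<bar> \<le> \<epsilon>"
    proof (intro allI impI)
      fix u1 u2 assume h: "long_hor_edge n K \<delta> u1 u2"
      have vv: "u1 \<in> verts n K" "u2 \<in> verts n K" using h by (auto simp: long_hor_edge_def horizontal_edge_def edge_def)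
      have "g u = fn u" if "u \<in> verts n K" "rr u = L" for u
      proof -
        have "\<bar>fn u\<bar> \<le> \<epsilon> * real (rr u)" using M xv that Mle unfolding fn_def by force
        thus ?thesis unfolding g_def by (rule clip_id)
      qed
      thus "\<bar>fn u1 - g u1\<bar> \<le> \<epsilon> \<and> \<bar>fn u2 - g u2\<bar> \<le> \<epsilon>"
        using rrH[OF h] rrH[OF lhor_sym[OF h]] vv eps by auto
    qed
    moreover have "\<forall>u1 u2. long_vert_edge n K \<delta> u1 u2 \<longrightarrow> g u1 = 0 \<and> g u2 = 0"
    proof (intro allI impI)
      fix u1 u2 assume h: "long_vert_edge n K \<delta> u1 u2"
      have "u1 \<in> V0" "u2 \<in> V0" using h lvert_sym[OF h] unfolding V0_def by blast+
      thus "g u1 = 0 \<and> g u2 = 0" using rr0 unfolding g_def by simp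
    qed
    moreover have "(MAX u\<in>verts n K. \<bar>g u\<bar>) \<le> (MAX u\<in>verts n K. \<bar>fn u\<bar>)"
      using finite_verts[OF K(1)] eps unfolding g_def by (intro max_mono_fin) (auto intro: clip_le)
    ultimately show "let fn = (\<lambda>u. f (x u)) in
            \<exists>g :: real \<times> real \<Rightarrow> real.
              (\<forall>u1 u2. short_edge n K \<delta> u1 u2 \<longrightarrow> \<bar>g u1 - g u2\<bar> \<le> \<epsilon>) \<and>
              (\<forall>u1 u2. long_hor_edge n K \<delta> u1 u2 \<longrightarrow>
                   \<bar>fn u1 - g u1\<bar> \<le> \<epsilon> \<and> \<bar>fn u2 - g u2\<bar> \<le> \<epsilon>) \<and>
              (\<forall>u1 u2. long_vert_edge n K \<delta> u1 u2 \<longrightarrow> g u1 = 0 \<and> g u2 = 0) \<and>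
              (MAX u\<in>verts n K. \<bar>g u\<bar>) \<le> (MAX u\<in>verts n K. \<bar>fn u\<bar>)"
      unfolding Let_def fn_def[symmetric] by blast
  qed
qed

end
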